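(* Let $1\le\nu<\infty$, let $\phi(z)=az+b$ with $0<|a|<1$, $b\in\mathbb{C}$, and let $w(z)=e^{p+qz}$ with $p,q\in\mathbb{C}$. Then: if $\operatorname{Re}p+\operatorname{Re}\left(\frac{qb}{1-a}\right)>0$, the operator $W_{w,\phi}$ is not power-bounded on $\mathcal{F}^\nu$; if $\operatorname{Re}p+\operatorname{Re}\left(\frac{qb}{1-a}\right)-\ln|a|<0$, the operator $W_{w,\phi}$ is power-bounded on $\mathcal{F}^\nu$.
   Context: For $1\le\nu<\infty$, $\mathcal{F}^\nu$ is the space of entire functions $f$ with $\|f\|_\nu:=\left(\frac{\nu}{2\pi}\int_{\mathbb{C}}|f(z)|^\nu e^{-\nu|z|^2/2}\,dm(z)\right)^{1/\nu}<\infty$. $W_{w,\phi}f=w\,(f\circ\phi)$. An operator $T$ is power-bounded if $\sup_{n\ge1}\|T^n\|<\infty$. *)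

theory Defs
  imports "HOL-Analysis.Analysis"
begin

definition fock_weight :: "real \<Rightarrow> (complex \<Rightarrow> complex) \<Rightarrow> complex \<Rightarrow> real" where
  "fock_weight \<nu> f z = cmod (f z) powr \<nu> * exp (- \<nu> * (cmod z)\<^sup>2 / 2)"

definition in_fock :: "real \<Rightarrow> (complex \<Rightarrow> complex) \<Rightarrow> bool" where
  "in_fock \<nu> f \<longleftrightarrow> f holomorphic_on UNIV \<and> integrable lborel (fock_weight \<nu> f)"

definition fock_norm :: "real \<Rightarrow> (complex \<Rightarrow> complex) \<Rightarrow> real" where
  "fock_norm \<nu> f = (\<nu> / (2 * pi) * (\<integral>z. fock_weight \<nu> f z \<partial>lborel)) powr (1 / \<nu>)"

definition wcomp :: "(complex \<Rightarrow> complex) \<Rightarrow> (complex \<Rightarrow> complex) \<Rightarrow> (complex \<Rightarrow> complex) \<Rightarrow> (complex \<Rightarrow> complex)" where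
  "wcomp w \<phi> f = (\<lambda>z. w z * f (\<phi> z))"

definition power_bounded :: "real \<Rightarrow> ((complex \<Rightarrow> complex) \<Rightarrow> (complex \<Rightarrow> complex)) \<Rightarrow> bool" where
  "power_bounded \<nu> T \<longleftrightarrow> (\<exists>C. \<forall>n\<ge>1. \<forall>f. in_fock \<nu> f \<longrightarrow>
      in_fock \<nu> ((T ^^ n) f) \<and> fock_norm \<nu> ((T ^^ n) f) \<le> C * fock_norm \<nu> f)"

end

theory Submission
  imports Defs "HOL-Complex_Analysis.Complex_Analysis" "HOL-Probability.Distributions"
begin

lemma lborel_complex_distr:
  "distr (lborel :: (real \<times> real) measure) borel (\<lambda>p. Complex (fst p) (snd p)) = (lborel :: complex measure)"
proof (rule lborel_eqI[symmetric])
  have meas: "(\<lambda>p::real\<times>real. Complex (fst p) (snd p)) \<in> borel_measurable borel"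
  proof -
    have "(\<lambda>p::real\<times>real. Complex (fst p) (snd p)) = (\<lambda>p. complex_of_real (fst p) + \<i> * complex_of_real (snd p))"
      by (auto simp: complex_eq_iff)
    moreover have "continuous_on UNIV (\<lambda>p::real\<times>real. complex_of_real (fst p) + \<i> * complex_of_real (snd p))"
      by (intro continuous_intros)
    ultimately show ?thesis by (metis borel_measurable_continuous_onI)
  qed
  fix l u :: complex
  assume lu: "\<And>b. b \<in> Basis \<Longrightarrow> l \<bullet> b \<le> u \<bullet> b"
  have "Re l \<le> Re u" "Im l \<le> Im u" using lu[of 1] lu[of \<i>] by (auto simp: Basis_complex_def)
  have pre: "(\<lambda>p::real\<times>real. Complex (fst p) (snd p)) -` box l u = box (Re l, Im l) (Re u, Im u)"
    by (auto simp: box_def Basis_complex_def Basis_prod_def inner_prod_def)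
  have "emeasure (distr lborel borel (\<lambda>p::real\<times>real. Complex (fst p) (snd p))) (box l u)
     = emeasure lborel (box (Re l, Im l) (Re u, Im u))"
    using meas by (simp add: emeasure_distr pre)
  also have "\<dots> = ennreal ((Re u - Re l) * (Im u - Im l))"
    using \<open>Re l \<le> Re u\<close> \<open>Im l \<le> Im u\<close>
    by (subst emeasure_lborel_box) (auto simp: Basis_prod_def inner_prod_def prod.union_disjoint)
  also have "\<dots> = ennreal (\<Prod>b\<in>Basis. (u - l) \<bullet> b)"
    by (simp add: Basis_complex_def)
  finally show "emeasure (distr lborel borel (\<lambda>p::real\<times>real. Complex (fst p) (snd p))) (box l u) = (\<Prod>b\<in>Basis. (u - l) \<bullet> b)" .
qed simp

lemma complex_iter:
  fixes F :: "complex \<Rightarrow> ennreal"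
  assumes [measurable]: "F \<in> borel_measurable borel"
  shows "(\<integral>\<^sup>+z. F z \<partial>lborel) = (\<integral>\<^sup>+x. \<integral>\<^sup>+y. F (Complex x y) \<partial>lborel \<partial>lborel)"
proof -
  have meas: "(\<lambda>p::real\<times>real. Complex (fst p) (snd p)) \<in> borel_measurable borel"
  proof -
    have "(\<lambda>p::real\<times>real. Complex (fst p) (snd p)) = (\<lambda>p. complex_of_real (fst p) + \<i> * complex_of_real (snd p))"
      by (auto simp: complex_eq_iff)
    moreover have "continuous_on UNIV (\<lambda>p::real\<times>real. complex_of_real (fst p) + \<i> * complex_of_real (snd p))"
      by (intro continuous_intros)
    ultimately show ?thesis by (metis borel_measurable_continuous_onI)
  qed
  have "(\<integral>\<^sup>+z. F z \<partial>lborel) = (\<integral>\<^sup>+z. F z \<partial>distr (lborel :: (real \<times> real) measure) borel (\<lambda>p. Complex (fst p) (snd p)))"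
    by (simp add: lborel_complex_distr)
  also have "\<dots> = (\<integral>\<^sup>+p. F (Complex (fst p) (snd p)) \<partial>(lborel :: (real \<times> real) measure))"
    using meas by (simp add: nn_integral_distr)
  also have "\<dots> = (\<integral>\<^sup>+p. F (Complex (fst p) (snd p)) \<partial>(lborel \<Otimes>\<^sub>M lborel))"
    by (simp add: lborel_prod)
  also have "\<dots> = (\<integral>\<^sup>+x. \<integral>\<^sup>+y. F (Complex x y) \<partial>lborel \<partial>lborel)"
  proof -
    have "(\<lambda>p. F (Complex (fst p) (snd p))) \<in> borel_measurable (lborel \<Otimes>\<^sub>M lborel)"
      using measurable_comp[OF meas assms] by (simp add: lborel_prod o_def)
    from sigma_finite_measure.nn_integral_fst[OF sigma_finite_lborel this] show ?thesis by simp
  qed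
  finally show ?thesis .
qed

lemma borel_measurable_Complex[measurable]:
  fixes f g :: "'a \<Rightarrow> real"
  assumes [measurable]: "f \<in> borel_measurable M" "g \<in> borel_measurable M"
  shows "(\<lambda>x. Complex (f x) (g x)) \<in> borel_measurable M"
proof -
  have "(\<lambda>x. Complex (f x) (g x)) = (\<lambda>x. complex_of_real (f x) + \<i> * complex_of_real (g x))"
    by (auto simp: complex_eq_iff)
  moreover have "(\<lambda>x. complex_of_real (f x) + \<i> * complex_of_real (g x)) \<in> borel_measurable M"
    by measurable
  ultimately show ?thesis by simp
qed

lemma rot_Re_nz:
  fixes F :: "complex \<Rightarrow> ennreal" and u :: complex
  assumes [measurable]: "F \<in> borel_measurable borel"
  assumes u: "cmod u = 1" and c0: "Re u \<noteq> 0"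
  shows "(\<integral>\<^sup>+z. F (u * z) \<partial>lborel) = (\<integral>\<^sup>+z. F z \<partial>lborel)"
proof -
  define c where "c = Re u"
  define s where "s = Im u"
  have cs: "c\<^sup>2 + s\<^sup>2 = 1" using u unfolding c_def s_def cmod_def by simp
  have c: "c \<noteq> 0" using c0 c_def by simp
  have uz: "u * Complex x y = Complex (c*x - s*y) (s*x + c*y)" for x y
    by (simp add: complex_eq_iff c_def s_def)
  have m1[measurable]: "(\<lambda>z. F (u * z)) \<in> borel_measurable borel" by measurable
  have "(\<integral>\<^sup>+z. F (u * z) \<partial>lborel) = (\<integral>\<^sup>+x. \<integral>\<^sup>+y. F (u * Complex x y) \<partial>lborel \<partial>lborel)"
    by (rule complex_iter) measurable
  also have "\<dots> = (\<integral>\<^sup>+x. \<integral>\<^sup>+y. F (Complex (c*x - s*y) (s*x + c*y)) \<partial>lborel \<partial>lborel)"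
    by (simp add: uz)
  also have "\<dots> = (\<integral>\<^sup>+y. \<integral>\<^sup>+x. F (Complex (c*x - s*y) (s*x + c*y)) \<partial>lborel \<partial>lborel)"
    by (rule lborel_pair.Fubini'[symmetric]) measurable
  also have "\<dots> = (\<integral>\<^sup>+y. ennreal \<bar>1/c\<bar> * \<integral>\<^sup>+x. F (Complex x ((s*x + y)/c)) \<partial>lborel \<partial>lborel)"
  proof (rule nn_integral_cong)
    fix y :: real
    have "(\<integral>\<^sup>+x. F (Complex (c*x - s*y) (s*x + c*y)) \<partial>lborel)
       = ennreal \<bar>1/c\<bar> * (\<integral>\<^sup>+x. F (Complex (c*(s*y/c + 1/c*x) - s*y) (s*(s*y/c + 1/c*x) + c*y)) \<partial>lborel)"
      by (rule nn_integral_real_affine) (use c in auto)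
    also have "(\<lambda>x. Complex (c*(s*y/c + 1/c*x) - s*y) (s*(s*y/c + 1/c*x) + c*y)) = (\<lambda>x. Complex x ((s*x + y)/c))"
    proof
      fix x
      have "s*(s*y/c + 1/c*x) + c*y = (s*x + (s\<^sup>2 + c\<^sup>2)*y)/c"
        using c by (simp add: field_simps power2_eq_square)
      then show "Complex (c*(s*y/c + 1/c*x) - s*y) (s*(s*y/c + 1/c*x) + c*y) = Complex x ((s*x + y)/c)"
        using c cs by (simp add: field_simps)
    qed
    finally show "(\<integral>\<^sup>+x. F (Complex (c*x - s*y) (s*x + c*y)) \<partial>lborel) = ennreal \<bar>1/c\<bar> * \<integral>\<^sup>+x. F (Complex x ((s*x + y)/c)) \<partial>lborel"
      by simp
  qed
  also have "\<dots> = ennreal \<bar>1/c\<bar> * (\<integral>\<^sup>+y. \<integral>\<^sup>+x. F (Complex x ((s*x + y)/c)) \<partial>lborel \<partial>lborel)"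
    by (rule nn_integral_cmult) measurable
  also have "(\<integral>\<^sup>+y. \<integral>\<^sup>+x. F (Complex x ((s*x + y)/c)) \<partial>lborel \<partial>lborel) = (\<integral>\<^sup>+x. \<integral>\<^sup>+y. F (Complex x ((s*x + y)/c)) \<partial>lborel \<partial>lborel)"
    by (rule lborel_pair.Fubini') measurable
  also have "\<dots> = (\<integral>\<^sup>+x. ennreal \<bar>c\<bar> * \<integral>\<^sup>+y. F (Complex x y) \<partial>lborel \<partial>lborel)"
  proof (rule nn_integral_cong)
    fix x :: real
    have "(\<integral>\<^sup>+y. F (Complex x ((s*x + y)/c)) \<partial>lborel) = ennreal \<bar>c\<bar> * (\<integral>\<^sup>+y. F (Complex x ((s*x + (-(s*x) + c*y))/c)) \<partial>lborel)"
      by (rule nn_integral_real_affine) (use c in auto)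
    also have "(\<lambda>y. Complex x ((s*x + (-(s*x) + c*y))/c)) = (\<lambda>y. Complex x y)"
      using c by auto
    finally show "(\<integral>\<^sup>+y. F (Complex x ((s*x + y)/c)) \<partial>lborel) = ennreal \<bar>c\<bar> * \<integral>\<^sup>+y. F (Complex x y) \<partial>lborel"
      by simp
  qed
  also have "\<dots> = ennreal \<bar>c\<bar> * (\<integral>\<^sup>+x. \<integral>\<^sup>+y. F (Complex x y) \<partial>lborel \<partial>lborel)"
    by (rule nn_integral_cmult) measurable
  also have "(\<integral>\<^sup>+x. \<integral>\<^sup>+y. F (Complex x y) \<partial>lborel \<partial>lborel) = (\<integral>\<^sup>+z. F z \<partial>lborel)"
    by (rule complex_iter[symmetric]) measurable
  finally have "(\<integral>\<^sup>+z. F (u * z) \<partial>lborel) = (ennreal \<bar>1/c\<bar> * ennreal \<bar>c\<bar>) * (\<integral>\<^sup>+z. F z \<partial>lborel)"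
    by (simp add: mult.assoc)
  also have "ennreal \<bar>1/c\<bar> * ennreal \<bar>c\<bar> = 1"
    using c by (simp add: ennreal_mult[symmetric] abs_mult[symmetric])
  finally show ?thesis by simp
qed

lemma rot_inv:
  fixes F :: "complex \<Rightarrow> ennreal" and u :: complex
  assumes [measurable]: "F \<in> borel_measurable borel"
  assumes u: "cmod u = 1"
  shows "(\<integral>\<^sup>+z. F (u * z) \<partial>lborel) = (\<integral>\<^sup>+z. F z \<partial>lborel)"
proof (cases "Re u = 0")
  case False
  then show ?thesis using rot_Re_nz[OF assms(1) u] by simp
next
  case True
  then have "Im u = 1 \<or> Im u = -1" using u unfolding cmod_def
    by (auto simp: power2_eq_1_iff)
  then obtain v where v: "cmod v = 1" "Re v \<noteq> 0" "u = v * v"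
  proof
    assume "Im u = 1"
    then have "u = cis (pi/4) * cis (pi/4)" using True
      by (simp add: cis_mult complex_eq_iff)
    moreover have "Re (cis (pi/4)) \<noteq> 0" by (simp add: cos_45)
    ultimately show ?thesis using that[of "cis (pi/4)"] by simp
  next
    assume "Im u = -1"
    then have "u = cis (-pi/4) * cis (-pi/4)" using True
      by (simp add: cis_mult complex_eq_iff)
    moreover have "Re (cis (-pi/4)) \<noteq> 0" by (simp add: cos_45)
    ultimately show ?thesis using that[of "cis (-pi/4)"] by simp
  qed
  have [measurable]: "(\<lambda>z. F (v * z)) \<in> borel_measurable borel" by measurable
  have "(\<integral>\<^sup>+z. F (u * z) \<partial>lborel) = (\<integral>\<^sup>+z. (\<lambda>w. F (v * w)) (v * z) \<partial>lborel)"
    by (simp add: v(3) mult.assoc)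
  also have "\<dots> = (\<integral>\<^sup>+z. F (v * z) \<partial>lborel)"
    by (rule rot_Re_nz) (use v in auto)
  also have "\<dots> = (\<integral>\<^sup>+z. F z \<partial>lborel)"
    by (rule rot_Re_nz) (use v in auto)
  finally show ?thesis .
qed

lemma tangent_powr:
  fixes m x \<nu> :: real
  assumes "1 \<le> \<nu>" "0 < m" "0 \<le> x"
  shows "m powr \<nu> + \<nu> * m powr (\<nu> - 1) * (x - m) \<le> x powr \<nu>"
proof (cases "x = 0")
  case True
  have "m powr \<nu> + \<nu> * m powr (\<nu> - 1) * (0 - m) = (1 - \<nu>) * m powr \<nu>"
    using assms by (simp add: powr_diff field_simps)
  also have "\<dots> \<le> 0" using assms by (simp add: mult_nonpos_nonneg)
  finally show ?thesis using True by simp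
next
  case False
  then have x: "x \<in> {0<..}" using assms by simp
  have "x powr \<nu> - m powr \<nu> \<ge> \<nu> * m powr (\<nu> - 1) * (x - m)"
    by (rule convex_on_imp_above_tangent[OF powr_convex[OF assms(1)]])
       (use assms x in \<open>auto simp: interior_open intro!: has_field_derivative_at_within has_real_derivative_powr\<close>)
  then show ?thesis by simp
qed

lemma circle_mean:
  fixes g :: "complex \<Rightarrow> complex" and \<nu> :: real and z :: complex
  assumes holg: "g holomorphic_on UNIV" and nu: "1 \<le> \<nu>"
  shows "ennreal (cmod (g 0) powr \<nu>)
     \<le> (\<integral>\<^sup>+t. ennreal (cmod (g (z * circlepath 0 1 t)) powr \<nu>) * indicator {0..1} t \<partial>lborel)"
proof -
  define G where "G = g \<circ> (\<lambda>w. z * w)"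
  have holG: "G holomorphic_on UNIV"
    unfolding G_def by (rule holomorphic_on_compose) (auto intro: holomorphic_intros holomorphic_on_subset[OF holg])
  have contG: "continuous_on UNIV G" using holG holomorphic_on_imp_continuous_on by blast
  define \<gamma> where "\<gamma> = circlepath (0::complex) 1"
  have \<gamma>: "\<gamma> t = exp (2 * of_real pi * \<i> * of_real t)" for t
    by (simp add: \<gamma>_def circlepath)
  have "((\<lambda>w. G w / (w - 0)) has_contour_integral (2 * of_real pi * \<i> * G 0)) \<gamma>"
    unfolding \<gamma>_def by (rule Cauchy_integral_circlepath_simple) (auto intro: holomorphic_on_subset[OF holG])
  then have "((\<lambda>t. G (\<gamma> t) / (\<gamma> t - 0) * vector_derivative \<gamma> (at t within {0..1})) has_integral (2 * of_real pi * \<i> * G 0)) {0..1}"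
    by (simp add: has_contour_integral_def)
  moreover have "G (\<gamma> t) / (\<gamma> t - 0) * vector_derivative \<gamma> (at t within {0..1}) = (2 * of_real pi * \<i>) * G (\<gamma> t)"
    if "t \<in> {0..1}" for t
    using that unfolding \<gamma>_def by (subst vector_derivative_circlepath01) (auto simp: circlepath)
  ultimately have "((\<lambda>t. (2 * of_real pi * \<i>) * G (\<gamma> t)) has_integral (2 * of_real pi * \<i> * G 0)) {0..1}"
    using has_integral_cong by (metis (no_types, lifting))
  then have hi: "((\<lambda>t. G (\<gamma> t)) has_integral G 0) {0..1}"
    by (subst (asm) has_integral_mult_right_iff) auto
  have contg: "continuous_on {0..1} (\<lambda>t. G (\<gamma> t))"
    unfolding \<gamma> by (intro continuous_on_compose2[OF contG] continuous_intros) auto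
  define h where "h t = cmod (G (\<gamma> t))" for t
  have conth: "continuous_on {0..1} h" unfolding h_def by (intro continuous_intros contg)
  have inth: "h integrable_on {0..1}" by (rule integrable_continuous_interval[OF conth])
  have "cmod (G 0) \<le> integral {0..1} h"
  proof -
    have "cmod (integral {0..1} (\<lambda>t. G (\<gamma> t))) \<le> integral {0..1} h"
      by (rule Henstock_Kurzweil_Integration.integral_norm_bound_integral) (use hi inth h_def in auto)
    then show ?thesis using hi by (simp add: integral_unique)
  qed
  define m where "m = cmod (G 0)"
  have G0: "G 0 = g 0" by (simp add: G_def)
  have hpow_cont: "continuous_on {0..1} (\<lambda>t. h t powr \<nu>)"
    using nu by (intro continuous_on_powr' conth continuous_intros) (auto simp: h_def)
  have inthp: "(\<lambda>t. h t powr \<nu>) integrable_on {0..1}" by (rule integrable_continuous_interval[OF hpow_cont])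
  have key: "m powr \<nu> \<le> integral {0..1} (\<lambda>t. h t powr \<nu>)"
  proof (cases "m = 0")
    case True
    then show ?thesis using integral_nonneg[OF inthp] by simp
  next
    case False
    then have m0: "0 < m" unfolding m_def by simp
    define K where "K = \<nu> * m powr (\<nu> - 1)"
    have K0: "0 \<le> K" unfolding K_def using nu by simp
    have inta: "(\<lambda>t. m powr \<nu> + K * (h t - m)) integrable_on {0..1}"
      by (rule integrable_continuous_interval) (intro continuous_intros conth)
    have "integral {0..1} (\<lambda>t. m powr \<nu> + K * (h t - m)) \<le> integral {0..1} (\<lambda>t. h t powr \<nu>)"
      by (rule integral_le[OF inta inthp]) (use tangent_powr[OF nu m0] h_def in \<open>auto simp: K_def\<close>)
    moreover have "integral {0..1} (\<lambda>t. m powr \<nu> + K * (h t - m)) = m powr \<nu> + K * (integral {0..1} h - m)"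
    proof -
      have "((\<lambda>t. m powr \<nu> + K * (h t - m)) has_integral (m powr \<nu> + K * (integral {0..1} h - m))) {0..1}"
        using has_integral_add[OF has_integral_const_real[of "m powr \<nu>" 0 1]
                  has_integral_mult_right[OF has_integral_diff[OF integrable_integral[OF inth] has_integral_const_real[of m 0 1]], of K]]
        by simp
      then show ?thesis by (rule integral_unique)
    qed
    moreover have "0 \<le> K * (integral {0..1} h - m)"
      using K0 \<open>cmod (G 0) \<le> integral {0..1} h\<close> m_def by simp
    ultimately show ?thesis by linarith
  qed
  have "(\<integral>\<^sup>+t. ennreal (h t powr \<nu>) * indicator {0..1} t \<partial>lborel) = ennreal (integral {0..1} (\<lambda>t. h t powr \<nu>))"
    by (rule nn_integral_has_integral_lebesgue') (use integrable_integral[OF inthp] in auto)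
  moreover have "h t = cmod (g (z * circlepath 0 1 t))" for t
    by (simp add: h_def G_def \<gamma>_def)
  ultimately show ?thesis
    using key G0 m_def by (auto intro!: ennreal_leI)
qed

definition rho :: "real \<Rightarrow> complex \<Rightarrow> real" where
  "rho \<nu> z = exp (- \<nu> * (cmod z)\<^sup>2 / 2)"

lemma rho_meas[measurable]: "rho \<nu> \<in> borel_measurable borel"
  unfolding rho_def by measurable

lemma circlepath_meas[measurable]: "circlepath (0::complex) 1 \<in> borel_measurable borel"
  by (rule borel_measurable_continuous_onI) (simp add: circlepath continuous_intros)

lemma pw0:
  fixes g :: "complex \<Rightarrow> complex" and \<nu> :: real
  assumes holg: "g holomorphic_on UNIV" and nu: "1 \<le> \<nu>"
  shows "ennreal (cmod (g 0) powr \<nu>) * (\<integral>\<^sup>+z. ennreal (rho \<nu> z) \<partial>lborel)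
     \<le> (\<integral>\<^sup>+z. ennreal (cmod (g z) powr \<nu> * rho \<nu> z) \<partial>lborel)"
proof -
  have gm[measurable]: "g \<in> borel_measurable borel"
    using holg holomorphic_on_imp_continuous_on borel_measurable_continuous_onI by blast
  have "ennreal (cmod (g 0) powr \<nu>) * (\<integral>\<^sup>+z. ennreal (rho \<nu> z) \<partial>lborel)
      = (\<integral>\<^sup>+z. ennreal (cmod (g 0) powr \<nu>) * ennreal (rho \<nu> z) \<partial>lborel)"
    by (rule nn_integral_cmult[symmetric]) measurable
  also have "\<dots> \<le> (\<integral>\<^sup>+z. (\<integral>\<^sup>+t. ennreal (cmod (g (z * circlepath 0 1 t)) powr \<nu>) * indicator {0..1} t \<partial>lborel) * ennreal (rho \<nu> z) \<partial>lborel)"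
    by (intro nn_integral_mono mult_right_mono circle_mean[OF holg nu]) auto
  also have "\<dots> = (\<integral>\<^sup>+z. \<integral>\<^sup>+t. ennreal (cmod (g (z * circlepath 0 1 t)) powr \<nu>) * indicator {0..1} t * ennreal (rho \<nu> z) \<partial>lborel \<partial>lborel)"
    by (intro nn_integral_cong nn_integral_multc[symmetric]) measurable
  also have "\<dots> = (\<integral>\<^sup>+t. \<integral>\<^sup>+z. ennreal (cmod (g (z * circlepath 0 1 t)) powr \<nu>) * indicator {0..1} t * ennreal (rho \<nu> z) \<partial>lborel \<partial>lborel)"
    by (rule lborel_pair.Fubini'[symmetric]) measurable
  also have "\<dots> = (\<integral>\<^sup>+t. indicator {0..1::real} t * (\<integral>\<^sup>+z. ennreal (cmod (g z) powr \<nu> * rho \<nu> z) \<partial>lborel) \<partial>lborel)"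
  proof (rule nn_integral_cong)
    fix t :: real
    define u where "u = circlepath (0::complex) 1 t"
    have u1: "cmod u = 1" by (simp add: u_def circlepath norm_mult)
    have "(\<integral>\<^sup>+z. ennreal (cmod (g (z * u)) powr \<nu>) * indicator {0..1} t * ennreal (rho \<nu> z) \<partial>lborel)
       = (\<integral>\<^sup>+z. indicator {0..1} t * ennreal (cmod (g (u * z)) powr \<nu> * rho \<nu> (u * z)) \<partial>lborel)"
      by (intro nn_integral_cong) (auto simp: rho_def norm_mult u1 ennreal_mult' mult.commute mult.assoc)
    also have "\<dots> = indicator {0..1} t * (\<integral>\<^sup>+z. ennreal (cmod (g (u * z)) powr \<nu> * rho \<nu> (u * z)) \<partial>lborel)"
      by (rule nn_integral_cmult) measurable
    also have "(\<integral>\<^sup>+z. ennreal (cmod (g (u * z)) powr \<nu> * rho \<nu> (u * z)) \<partial>lborel)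
       = (\<integral>\<^sup>+z. ennreal (cmod (g z) powr \<nu> * rho \<nu> z) \<partial>lborel)"
      using rot_inv[of "\<lambda>z. ennreal (cmod (g z) powr \<nu> * rho \<nu> z)" u] u1 by simp
    finally show "(\<integral>\<^sup>+z. ennreal (cmod (g (z * circlepath 0 1 t)) powr \<nu>) * indicator {0..1} t * ennreal (rho \<nu> z) \<partial>lborel)
       = indicator {0..1} t * (\<integral>\<^sup>+z. ennreal (cmod (g z) powr \<nu> * rho \<nu> z) \<partial>lborel)"
      by (simp add: u_def)
  qed
  also have "\<dots> = (\<integral>\<^sup>+t. indicator {0..1::real} t \<partial>lborel) * (\<integral>\<^sup>+z. ennreal (cmod (g z) powr \<nu> * rho \<nu> z) \<partial>lborel)"
    by (rule nn_integral_multc) measurable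
  also have "(\<integral>\<^sup>+t. indicator {0..1::real} t \<partial>lborel) = 1"
    by simp
  finally show ?thesis by simp
qed

lemma fock_weight_meas[measurable]:
  assumes "f holomorphic_on UNIV"
  shows "fock_weight \<nu> f \<in> borel_measurable borel"
proof -
  have [measurable]: "f \<in> borel_measurable borel"
    using assms holomorphic_on_imp_continuous_on borel_measurable_continuous_onI by blast
  show ?thesis unfolding fock_weight_def[abs_def] by measurable
qed

lemma fock_weight_nonneg: "0 \<le> fock_weight \<nu> f z"
  by (simp add: fock_weight_def)

lemma cmod_plus_sq: "(cmod (u + z))\<^sup>2 = (cmod z)\<^sup>2 + 2 * Re (cnj u * z) + (cmod u)\<^sup>2"
  by (simp only: cmod_power2) (simp add: power2_eq_square algebra_simps)

lemma pw:
  fixes f :: "complex \<Rightarrow> complex" and \<nu> :: real and u :: complex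
  assumes holf: "f holomorphic_on UNIV" and nu: "1 \<le> \<nu>"
  shows "ennreal (cmod (f u) powr \<nu> * rho \<nu> u) * (\<integral>\<^sup>+z. ennreal (rho \<nu> z) \<partial>lborel)
     \<le> (\<integral>\<^sup>+z. ennreal (fock_weight \<nu> f z) \<partial>lborel)"
proof -
  define g where "g z = f (z + u) * exp (- (cnj u) * z)" for z
  have holg: "g holomorphic_on UNIV"
  proof -
    have "(f \<circ> (\<lambda>z. z + u)) holomorphic_on UNIV"
      by (rule holomorphic_on_compose) (auto intro: holomorphic_intros holomorphic_on_subset[OF holf])
    then show ?thesis unfolding g_def[abs_def] by (auto simp: o_def intro!: holomorphic_intros)
  qed
  define E where "E = exp (\<nu> * (cmod u)\<^sup>2 / 2)"
  have iden: "cmod (g z) powr \<nu> * rho \<nu> z = fock_weight \<nu> f (u + z) * E" for z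
  proof -
    have "cmod (g z) powr \<nu> = cmod (f (z + u)) powr \<nu> * exp (Re (- (cnj u) * z) * \<nu>)"
      by (simp add: g_def norm_mult powr_mult exp_powr_real)
    moreover have "exp (Re (- (cnj u) * z) * \<nu>) * rho \<nu> z = exp (- \<nu> * (cmod (u + z))\<^sup>2 / 2) * E"
    proof -
      have "Re (- (cnj u) * z) * \<nu> + (- \<nu> * (cmod z)\<^sup>2 / 2) = - \<nu> * (cmod (u + z))\<^sup>2 / 2 + \<nu> * (cmod u)\<^sup>2 / 2"
        unfolding cmod_plus_sq by (simp add: field_simps)
      then show ?thesis unfolding rho_def E_def mult_exp_exp by simp
    qed
    ultimately show ?thesis
      by (simp add: fock_weight_def add.commute mult.assoc)
  qed
  have [measurable]: "fock_weight \<nu> f \<in> borel_measurable borel" using holf by measurable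
  have "ennreal (cmod (f u) powr \<nu>) * (\<integral>\<^sup>+z. ennreal (rho \<nu> z) \<partial>lborel)
      \<le> (\<integral>\<^sup>+z. ennreal (cmod (g z) powr \<nu> * rho \<nu> z) \<partial>lborel)"
    using pw0[OF holg nu] by (simp add: g_def)
  also have "\<dots> = (\<integral>\<^sup>+z. ennreal (fock_weight \<nu> f (u + z)) * ennreal E \<partial>lborel)"
    by (intro nn_integral_cong) (simp add: iden ennreal_mult' fock_weight_nonneg E_def)
  also have "\<dots> = (\<integral>\<^sup>+z. ennreal (fock_weight \<nu> f (u + z)) \<partial>lborel) * ennreal E"
    by (rule nn_integral_multc) measurable
  also have "(\<integral>\<^sup>+z. ennreal (fock_weight \<nu> f (u + z)) \<partial>lborel) = (\<integral>\<^sup>+z. ennreal (fock_weight \<nu> f z) \<partial>lborel)"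
  proof -
    have "(\<integral>\<^sup>+z. ennreal (fock_weight \<nu> f z) \<partial>lborel) = (\<integral>\<^sup>+z. ennreal (fock_weight \<nu> f z) \<partial>distr lborel borel ((+) u))"
      by (simp add: lborel_distr_plus)
    also have "\<dots> = (\<integral>\<^sup>+z. ennreal (fock_weight \<nu> f (u + z)) \<partial>lborel)"
      by (rule nn_integral_distr) measurable
    finally show ?thesis by simp
  qed
  finally have 1: "ennreal (cmod (f u) powr \<nu>) * (\<integral>\<^sup>+z. ennreal (rho \<nu> z) \<partial>lborel)
      \<le> (\<integral>\<^sup>+z. ennreal (fock_weight \<nu> f z) \<partial>lborel) * ennreal E" .
  have "ennreal (cmod (f u) powr \<nu> * rho \<nu> u) * (\<integral>\<^sup>+z. ennreal (rho \<nu> z) \<partial>lborel)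
      = ennreal (rho \<nu> u) * (ennreal (cmod (f u) powr \<nu>) * (\<integral>\<^sup>+z. ennreal (rho \<nu> z) \<partial>lborel))"
    by (simp add: ennreal_mult' rho_def mult.commute mult.left_commute)
  also have "\<dots> \<le> ennreal (rho \<nu> u) * ((\<integral>\<^sup>+z. ennreal (fock_weight \<nu> f z) \<partial>lborel) * ennreal E)"
    by (rule mult_left_mono[OF 1]) simp
  also have "\<dots> = (ennreal (rho \<nu> u) * ennreal E) * (\<integral>\<^sup>+z. ennreal (fock_weight \<nu> f z) \<partial>lborel)"
    by (simp add: ac_simps)
  also have "ennreal (rho \<nu> u) * ennreal E = 1"
    by (simp add: rho_def E_def ennreal_mult'[symmetric] mult_exp_exp)
  finally show ?thesis by simp
qed

lemma gauss1:
  fixes \<beta> :: real assumes b: "0 < \<beta>"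
  shows "(\<integral>\<^sup>+x. ennreal (exp (- \<beta> * x\<^sup>2)) \<partial>lborel) = ennreal (sqrt (pi / \<beta>))"
proof -
  define \<sigma> where "\<sigma> = 1 / sqrt (2 * \<beta>)"
  have s2: "\<sigma>\<^sup>2 = 1 / (2 * \<beta>)" using b by (simp add: \<sigma>_def power_divide)
  have nd: "normal_density 0 \<sigma> x = sqrt (\<beta> / pi) * exp (- \<beta> * x\<^sup>2)" for x
    using b by (simp add: normal_density_def s2 real_sqrt_divide field_simps)
  have "(\<integral>\<^sup>+x. ennreal (normal_density 0 \<sigma> x) \<partial>lborel) = 1"
    by (subst nn_integral_eq_integral) (use integrable_normal_density[of \<sigma> 0] integral_normal_density[of \<sigma> 0] b in \<open>auto simp: \<sigma>_def\<close>)
  then have "(\<integral>\<^sup>+x. ennreal (sqrt (\<beta> / pi)) * ennreal (exp (- \<beta> * x\<^sup>2)) \<partial>lborel) = 1"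
    using b by (simp add: nd ennreal_mult'[symmetric])
  then have "ennreal (sqrt (\<beta> / pi)) * (\<integral>\<^sup>+x. ennreal (exp (- \<beta> * x\<^sup>2)) \<partial>lborel) = 1"
    by (subst (asm) nn_integral_cmult) auto
  then have "ennreal (sqrt (pi / \<beta>)) * (ennreal (sqrt (\<beta> / pi)) * (\<integral>\<^sup>+x. ennreal (exp (- \<beta> * x\<^sup>2)) \<partial>lborel)) = ennreal (sqrt (pi / \<beta>))"
    by simp
  moreover have "ennreal (sqrt (pi / \<beta>)) * ennreal (sqrt (\<beta> / pi)) = 1"
    using b by (simp add: ennreal_mult[symmetric] real_sqrt_mult[symmetric])
  ultimately show ?thesis by (simp add: mult.assoc[symmetric])
qed

lemma gauss2:
  fixes \<beta> :: real assumes b: "0 < \<beta>"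
  shows "(\<integral>\<^sup>+z. ennreal (exp (- \<beta> * (cmod (z::complex))\<^sup>2)) \<partial>lborel) = ennreal (pi / \<beta>)"
proof -
  have "(\<integral>\<^sup>+z. ennreal (exp (- \<beta> * (cmod (z::complex))\<^sup>2)) \<partial>lborel)
      = (\<integral>\<^sup>+x. \<integral>\<^sup>+y. ennreal (exp (- \<beta> * (cmod (Complex x y))\<^sup>2)) \<partial>lborel \<partial>lborel)"
    by (rule complex_iter) measurable
  also have "\<dots> = (\<integral>\<^sup>+x. \<integral>\<^sup>+y. ennreal (exp (- \<beta> * x\<^sup>2)) * ennreal (exp (- \<beta> * y\<^sup>2)) \<partial>lborel \<partial>lborel)"
    by (intro nn_integral_cong) (simp add: cmod_power2 ennreal_mult[symmetric] mult_exp_exp algebra_simps)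
  also have "\<dots> = (\<integral>\<^sup>+x. ennreal (exp (- \<beta> * x\<^sup>2)) * ennreal (sqrt (pi / \<beta>)) \<partial>lborel)"
    using gauss1[OF b] by (intro nn_integral_cong) (simp add: nn_integral_cmult)
  also have "\<dots> = ennreal (sqrt (pi / \<beta>)) * ennreal (sqrt (pi / \<beta>))"
    using gauss1[OF b] by (simp add: nn_integral_multc)
  also have "\<dots> = ennreal (pi / \<beta>)"
    using b by (simp add: ennreal_mult[symmetric])
  finally show ?thesis .
qed

lemma rho_integral:
  assumes "0 < \<nu>"
  shows "(\<integral>\<^sup>+z. ennreal (rho \<nu> z) \<partial>lborel) = ennreal (2 * pi / \<nu>)"
proof -
  have "(\<integral>\<^sup>+z. ennreal (rho \<nu> z) \<partial>lborel) = (\<integral>\<^sup>+z. ennreal (exp (- (\<nu>/2) * (cmod (z::complex))\<^sup>2)) \<partial>lborel)"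
    by (simp add: rho_def)
  also have "\<dots> = ennreal (pi / (\<nu>/2))" using assms by (intro gauss2) simp
  finally show ?thesis by (simp add: mult.commute)
qed

lemma integrable_quad:
  fixes A B C :: real assumes B: "0 < B"
  shows "integrable lborel (\<lambda>z::complex. exp (A * cmod z + C - B * (cmod z)\<^sup>2))"
proof (rule integrableI_bounded)
  show "(\<lambda>z::complex. exp (A * cmod z + C - B * (cmod z)\<^sup>2)) \<in> borel_measurable lborel" by measurable
  define K where "K = C + A\<^sup>2 / (2 * B)"
  have le: "exp (A * r + C - B * r\<^sup>2) \<le> exp K * exp (- (B/2) * r\<^sup>2)" for r :: real
  proof -
    have "0 \<le> (B/2) * (r - A/B)\<^sup>2" using B by simp
    moreover have "(B/2) * (r - A/B)\<^sup>2 = (B/2)*r\<^sup>2 - A*r + A\<^sup>2/(2*B)"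
      using B by (simp add: power2_eq_square field_simps)
    ultimately have "A * r + C - B * r\<^sup>2 \<le> K + (- (B/2) * r\<^sup>2)"
      unfolding K_def by linarith
    then show ?thesis by (simp add: mult_exp_exp)
  qed
  have "(\<integral>\<^sup>+z. ennreal (norm (exp (A * cmod (z::complex) + C - B * (cmod z)\<^sup>2))) \<partial>lborel)
      \<le> (\<integral>\<^sup>+z. ennreal (exp K) * ennreal (exp (- (B/2) * (cmod (z::complex))\<^sup>2)) \<partial>lborel)"
  proof (intro nn_integral_mono)
    fix z :: complex
    have "norm (exp (A * cmod z + C - B * (cmod z)\<^sup>2)) \<le> exp K * exp (- (B/2) * (cmod z)\<^sup>2)"
      using le[of "cmod z"] by simp
    then have "ennreal (norm (exp (A * cmod z + C - B * (cmod z)\<^sup>2))) \<le> ennreal (exp K * exp (- (B/2) * (cmod z)\<^sup>2))"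
      by (rule ennreal_leI)
    then show "ennreal (norm (exp (A * cmod z + C - B * (cmod z)\<^sup>2))) \<le> ennreal (exp K) * ennreal (exp (- (B/2) * (cmod z)\<^sup>2))"
      by (simp add: ennreal_mult)
  qed
  also have "\<dots> = ennreal (exp K) * ennreal (pi / (B/2))"
    using B gauss2[of "B/2"] by (simp add: nn_integral_cmult)
  also have "\<dots> < \<infinity>" by (simp add: ennreal_mult_less_top)
  finally show "(\<integral>\<^sup>+z. ennreal (norm (exp (A * cmod (z::complex) + C - B * (cmod z)\<^sup>2))) \<partial>lborel) < \<infinity>" .
qed

lemma pw_real:
  assumes f: "in_fock \<nu> f" and nu: "1 \<le> \<nu>"
  shows "cmod (f u) powr \<nu> * rho \<nu> u * (2 * pi / \<nu>) \<le> integral\<^sup>L lborel (fock_weight \<nu> f)"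
proof -
  have holf: "f holomorphic_on UNIV" and intf: "integrable lborel (fock_weight \<nu> f)"
    using f by (auto simp: in_fock_def)
  have "ennreal (cmod (f u) powr \<nu> * rho \<nu> u) * ennreal (2 * pi / \<nu>) \<le> (\<integral>\<^sup>+z. ennreal (fock_weight \<nu> f z) \<partial>lborel)"
    using pw[OF holf nu, of u] rho_integral[of \<nu>] nu by simp
  also have "\<dots> = ennreal (integral\<^sup>L lborel (fock_weight \<nu> f))"
    by (rule nn_integral_eq_integral[OF intf]) (simp add: fock_weight_nonneg)
  moreover have "ennreal (cmod (f u) powr \<nu> * rho \<nu> u * (2 * pi / \<nu>)) = ennreal (cmod (f u) powr \<nu> * rho \<nu> u) * ennreal (2 * pi / \<nu>)"
    by (rule ennreal_mult) (use nu in \<open>auto simp: rho_def\<close>)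
  ultimately have "ennreal (cmod (f u) powr \<nu> * rho \<nu> u * (2 * pi / \<nu>)) \<le> ennreal (integral\<^sup>L lborel (fock_weight \<nu> f))"
    by simp
  moreover have "0 \<le> integral\<^sup>L lborel (fock_weight \<nu> f)"
    by (simp add: fock_weight_nonneg)
  ultimately show ?thesis by (simp add: ennreal_le_iff)
qed

lemma fock_weight_scale:
  "fock_weight \<nu> (\<lambda>z. k * f z) z = cmod k powr \<nu> * fock_weight \<nu> f z"
  by (simp add: fock_weight_def norm_mult powr_mult)

lemma fock_norm_scale:
  assumes "0 < \<nu>"
  shows "fock_norm \<nu> (\<lambda>z. k * f z) = cmod k * fock_norm \<nu> f"
proof -
  have "integral\<^sup>L lborel (fock_weight \<nu> (\<lambda>z. k * f z)) = cmod k powr \<nu> * integral\<^sup>L lborel (fock_weight \<nu> f)"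
  proof -
    have "fock_weight \<nu> (\<lambda>z. k * f z) = (\<lambda>z. cmod k powr \<nu> * fock_weight \<nu> f z)"
      by (rule ext) (rule fock_weight_scale)
    then show ?thesis by simp
  qed
  then have "fock_norm \<nu> (\<lambda>z. k * f z) = (cmod k powr \<nu> * (\<nu> / (2 * pi) * integral\<^sup>L lborel (fock_weight \<nu> f))) powr (1 / \<nu>)"
    by (simp add: fock_norm_def mult_ac)
  also have "\<dots> = (cmod k powr \<nu>) powr (1/\<nu>) * fock_norm \<nu> f"
    unfolding fock_norm_def by (rule powr_mult)
  also have "(cmod k powr \<nu>) powr (1/\<nu>) = cmod k"
    using assms by (simp add: powr_powr)
  finally show ?thesis .
qed

lemma in_fock_exp:
  assumes nu: "1 \<le> \<nu>"
  shows "in_fock \<nu> (\<lambda>z. exp (c * z))"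
  unfolding in_fock_def
proof
  show "(\<lambda>z. exp (c * z)) holomorphic_on UNIV" by (intro holomorphic_intros)
  have hol: "(\<lambda>z. exp (c * z)) holomorphic_on UNIV" by (intro holomorphic_intros)
  show "integrable lborel (fock_weight \<nu> (\<lambda>z. exp (c * z)))"
  proof (rule Bochner_Integration.integrable_bound)
    show "integrable lborel (\<lambda>z::complex. exp ((\<nu> * cmod c) * cmod z + 0 - (\<nu>/2) * (cmod z)\<^sup>2))"
      using nu by (intro integrable_quad) simp
    show "fock_weight \<nu> (\<lambda>z. exp (c * z)) \<in> borel_measurable lborel"
      using fock_weight_meas[OF hol] by simp
    show "AE z in lborel. norm (fock_weight \<nu> (\<lambda>z. exp (c * z)) z) \<le> norm (exp ((\<nu> * cmod c) * cmod z + 0 - (\<nu>/2) * (cmod z)\<^sup>2))"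
    proof (rule AE_I2)
      fix z :: complex
      have "Re (c * z) \<le> cmod c * cmod z"
        by (metis complex_Re_le_cmod norm_mult)
      then have "\<nu> * Re (c * z) \<le> \<nu> * (cmod c * cmod z)" using nu by (intro mult_left_mono) auto
      then have "exp (Re (c * z) * \<nu>) * exp (- \<nu> * (cmod z)\<^sup>2 / 2) \<le> exp ((\<nu> * cmod c) * cmod z + 0 - (\<nu>/2) * (cmod z)\<^sup>2)"
        by (simp add: mult_exp_exp algebra_simps)
      then show "norm (fock_weight \<nu> (\<lambda>z. exp (c * z)) z) \<le> norm (exp ((\<nu> * cmod c) * cmod z + 0 - (\<nu>/2) * (cmod z)\<^sup>2))"
        by (simp add: fock_weight_def exp_powr_real)
    qed
  qed
qed

lemma fock_norm_exp_pos:
  assumes nu: "1 \<le> \<nu>"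
  shows "0 < fock_norm \<nu> (\<lambda>z. exp (c * z))"
proof -
  have "cmod (exp (c * 0)) powr \<nu> * rho \<nu> 0 * (2 * pi / \<nu>) \<le> integral\<^sup>L lborel (fock_weight \<nu> (\<lambda>z. exp (c * z)))"
    by (rule pw_real[OF in_fock_exp[OF nu] nu])
  then have "2 * pi / \<nu> \<le> integral\<^sup>L lborel (fock_weight \<nu> (\<lambda>z. exp (c * z)))"
    by (simp add: rho_def)
  moreover have "0 < 2 * pi / \<nu>" using nu by simp
  ultimately have I: "0 < integral\<^sup>L lborel (fock_weight \<nu> (\<lambda>z. exp (c * z)))" by linarith
  have "0 < \<nu> / (2 * pi) * integral\<^sup>L lborel (fock_weight \<nu> (\<lambda>z. exp (c * z)))"
    using nu I by (intro mult_pos_pos divide_pos_pos) auto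
  then have "\<nu> / (2 * pi) * integral\<^sup>L lborel (fock_weight \<nu> (\<lambda>z. exp (c * z))) \<noteq> 0" by linarith
  then show ?thesis unfolding fock_norm_def by (simp only: powr_gt_zero) simp
qed

lemma part1:
  fixes \<nu> :: real and a b p q :: complex
  assumes nu: "1 \<le> \<nu>" and a1: "cmod a < 1"
  assumes pos: "Re p + Re (q * b / (1 - a)) > 0"
  shows "\<not> power_bounded \<nu> (wcomp (\<lambda>z. exp (p + q * z)) (\<lambda>z. a * z + b))"
proof
  define T where "T = wcomp (\<lambda>z. exp (p + q * z)) (\<lambda>z. a * z + b)"
  assume "power_bounded \<nu> (wcomp (\<lambda>z. exp (p + q * z)) (\<lambda>z. a * z + b))"
  then obtain C where C: "\<And>n f. n \<ge> 1 \<Longrightarrow> in_fock \<nu> f \<Longrightarrow> fock_norm \<nu> ((T ^^ n) f) \<le> C * fock_norm \<nu> f"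
    unfolding power_bounded_def T_def by blast
  have a1': "a \<noteq> 1" using a1 by auto
  define c where "c = q / (1 - a)"
  define lam where "lam = exp (p + q * b / (1 - a))"
  define f0 where "f0 = (\<lambda>z. exp (c * z))"
  have Tf0: "T (\<lambda>z. k * f0 z) = (\<lambda>z. (lam * k) * f0 z)" for k
  proof
    fix z
    have c1: "c * (1 - a) = q" using a1' by (simp add: c_def)
    have "p + q * z + c * (a * z + b) = p + c * b + c * z"
      by (subst c1[symmetric]) (simp add: algebra_simps)
    also have "c * b = q * b / (1 - a)" by (simp add: c_def)
    finally have eq: "p + q * z + c * (a * z + b) = (p + q * b / (1 - a)) + c * z" by simp
    have "exp (p + q * z) * exp (c * (a * z + b)) = exp (p + q * z + c * (a * z + b))"
      by (simp add: exp_add)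
    also have "\<dots> = exp ((p + q * b / (1 - a)) + c * z)" by (simp only: eq)
    also have "\<dots> = lam * exp (c * z)" by (simp add: lam_def exp_add)
    finally have "exp (p + q * z) * exp (c * (a * z + b)) = lam * exp (c * z)" .
    then show "T (\<lambda>z. k * f0 z) z = (lam * k) * f0 z"
      by (simp add: T_def wcomp_def f0_def mult_ac)
  qed
  have Tn: "(T ^^ n) f0 = (\<lambda>z. lam ^ n * f0 z)" for n
  proof (induction n)
    case 0 then show ?case by simp
  next
    case (Suc n)
    have "(T ^^ Suc n) f0 = T (\<lambda>z. lam ^ n * f0 z)" using Suc.IH by simp
    also have "\<dots> = (\<lambda>z. (lam * lam ^ n) * f0 z)" by (rule Tf0)
    finally show ?case by simp
  qed
  have L: "cmod lam > 1" using pos unfolding lam_def by simp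
  have F0: "0 < fock_norm \<nu> f0" unfolding f0_def by (rule fock_norm_exp_pos[OF nu])
  have infock: "in_fock \<nu> f0" unfolding f0_def by (rule in_fock_exp[OF nu])
  obtain n where n: "C < cmod lam ^ n" using real_arch_pow[OF L] by blast
  have "cmod lam ^ Suc n * fock_norm \<nu> f0 \<le> C * fock_norm \<nu> f0"
  proof -
    have "fock_norm \<nu> ((T ^^ Suc n) f0) = fock_norm \<nu> (\<lambda>z. lam ^ Suc n * f0 z)" by (simp only: Tn)
    also have "\<dots> = cmod lam ^ Suc n * fock_norm \<nu> f0"
      using nu by (simp only: fock_norm_scale norm_power)
    finally show ?thesis using C[OF _ infock, of "Suc n"] by simp
  qed
  then have "cmod lam ^ Suc n \<le> C" using F0 by simp
  moreover have "cmod lam ^ n \<le> cmod lam ^ Suc n" using L by (intro power_increasing) auto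
  ultimately show False using n by simp
qed

lemma closed_form:
  fixes a b p q :: complex
  assumes a1: "a \<noteq> 1"
  defines "z0 \<equiv> b / (1 - a)"
  defines "lam \<equiv> exp (p + q * z0)"
  shows "(wcomp (\<lambda>z. exp (p + q * z)) (\<lambda>z. a * z + b) ^^ n) f
     = (\<lambda>z. lam ^ n * exp (q * (z - z0) * (\<Sum>k<n. a ^ k)) * f (z0 + a ^ n * (z - z0)))"
proof (induction n)
  case 0
  show ?case by simp
next
  case (Suc n)
  have bz: "a * z + b - z0 = a * (z - z0)" for z
  proof -
    have "b = (1 - a) * z0" using a1 by (simp add: z0_def)
    then show ?thesis by (simp add: algebra_simps)
  qed
  have S: "(\<Sum>k<Suc n. a ^ k) = 1 + a * (\<Sum>k<n. a ^ k)"
    by (subst sum.lessThan_Suc_shift) (simp add: sum_distrib_left)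
  show ?case
  proof
    fix z
    have "(wcomp (\<lambda>z. exp (p + q * z)) (\<lambda>z. a * z + b) ^^ Suc n) f z
        = exp (p + q * z) * (lam ^ n * exp (q * (a * z + b - z0) * (\<Sum>k<n. a ^ k)) * f (z0 + a ^ n * (a * z + b - z0)))"
      by (simp add: Suc.IH wcomp_def)
    also have "\<dots> = exp (p + q * z) * (lam ^ n * exp (q * (a * (z - z0)) * (\<Sum>k<n. a ^ k)) * f (z0 + a ^ Suc n * (z - z0)))"
      by (simp add: bz mult.assoc mult.left_commute[of "a ^ n" a])
    also have "exp (p + q * z) = lam * exp (q * (z - z0))"
      by (simp add: lam_def exp_add[symmetric] algebra_simps)
    also have "lam * exp (q * (z - z0)) * (lam ^ n * exp (q * (a * (z - z0)) * (\<Sum>k<n. a ^ k)) * f (z0 + a ^ Suc n * (z - z0)))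
        = lam ^ Suc n * (exp (q * (z - z0)) * exp (q * (a * (z - z0)) * (\<Sum>k<n. a ^ k))) * f (z0 + a ^ Suc n * (z - z0))"
      by (simp add: mult_ac)
    also have "exp (q * (z - z0)) * exp (q * (a * (z - z0)) * (\<Sum>k<n. a ^ k)) = exp (q * (z - z0) * (\<Sum>k<Suc n. a ^ k))"
      unfolding S by (simp add: exp_add[symmetric] algebra_simps)
    finally show "(wcomp (\<lambda>z. exp (p + q * z)) (\<lambda>z. a * z + b) ^^ Suc n) f z
        = lam ^ Suc n * exp (q * (z - z0) * (\<Sum>k<Suc n. a ^ k)) * f (z0 + a ^ Suc n * (z - z0))" .
  qed
qed

lemma geom_bound:
  fixes a :: complex assumes "cmod a < 1"
  shows "cmod (\<Sum>k<n. a ^ k) \<le> 1 / (1 - cmod a)"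
proof -
  have "cmod (\<Sum>k<n. a ^ k) \<le> (\<Sum>k<n. cmod a ^ k)"
    by (rule order_trans[OF norm_sum]) (simp add: norm_power)
  also have "\<dots> = (1 - cmod a ^ n) / (1 - cmod a)"
    using assms by (simp add: sum_gp_strict)
  also have "\<dots> \<le> 1 / (1 - cmod a)"
    using assms by (intro divide_right_mono) auto
  finally show ?thesis .
qed

lemma exponent_bound:
  fixes a q z z0 :: complex and n :: nat
  assumes a1: "cmod a < 1" and n: "1 \<le> n"
  defines "Sb \<equiv> 1 / (1 - cmod a)"
  shows "Re (q * (z - z0) * (\<Sum>k<n. a ^ k)) + (cmod (z0 + a ^ n * (z - z0)))\<^sup>2 / 2 - (cmod z)\<^sup>2 / 2
     \<le> (cmod q * Sb + 2 * cmod z0 * cmod a) * cmod z + (cmod q * Sb * cmod z0 + 2 * (cmod z0)\<^sup>2)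
        - ((1 - (cmod a)\<^sup>2) / 2) * (cmod z)\<^sup>2"
proof -
  have Sb0: "0 \<le> Sb" using a1 by (simp add: Sb_def)
  have dz: "cmod (z - z0) \<le> cmod z + cmod z0" by (rule norm_triangle_ineq4)
  have "Re (q * (z - z0) * (\<Sum>k<n. a ^ k)) \<le> cmod (q * (z - z0) * (\<Sum>k<n. a ^ k))"
    by (rule complex_Re_le_cmod)
  also have "\<dots> = cmod q * cmod (z - z0) * cmod (\<Sum>k<n. a ^ k)" by (simp add: norm_mult)
  also have "\<dots> \<le> cmod q * (cmod z + cmod z0) * Sb"
    using geom_bound[OF a1, of n] dz unfolding Sb_def
    by (intro mult_mono) (auto intro: mult_left_mono)
  finally have 1: "Re (q * (z - z0) * (\<Sum>k<n. a ^ k)) \<le> cmod q * (cmod z + cmod z0) * Sb" .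
  have an: "cmod a ^ n \<le> cmod a"
    using power_decreasing[OF n, of "cmod a"] a1 by simp
  have "cmod (z0 + a ^ n * (z - z0)) \<le> cmod z0 + cmod a ^ n * cmod (z - z0)"
    by (metis norm_mult norm_power norm_triangle_ineq)
  also have "\<dots> \<le> cmod z0 + cmod a * (cmod z + cmod z0)"
    using an dz by (intro add_left_mono mult_mono) auto
  also have "\<dots> \<le> 2 * cmod z0 + cmod a * cmod z"
    using a1 by (simp add: algebra_simps mult_left_le_one_le)
  finally have "cmod (z0 + a ^ n * (z - z0)) \<le> 2 * cmod z0 + cmod a * cmod z" .
  then have 2: "(cmod (z0 + a ^ n * (z - z0)))\<^sup>2 \<le> (2 * cmod z0 + cmod a * cmod z)\<^sup>2"
    by (intro power_mono) auto
  have e: "(2 * cmod z0 + cmod a * cmod z)\<^sup>2 = 4 * (cmod z0)\<^sup>2 + 4 * cmod z0 * cmod a * cmod z + (cmod a)\<^sup>2 * (cmod z)\<^sup>2"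
    by (simp add: power2_eq_square algebra_simps)
  have e2: "((1 - (cmod a)\<^sup>2) / 2) * (cmod z)\<^sup>2 = (cmod z)\<^sup>2 / 2 - (cmod a)\<^sup>2 * (cmod z)\<^sup>2 / 2"
    by (simp add: field_simps)
  have e3: "cmod q * (cmod z + cmod z0) * Sb = cmod q * Sb * cmod z + cmod q * Sb * cmod z0"
    by (simp add: algebra_simps)
  have "Re (q * (z - z0) * (\<Sum>k<n. a ^ k)) + (cmod (z0 + a ^ n * (z - z0)))\<^sup>2 / 2 - (cmod z)\<^sup>2 / 2
     \<le> cmod q * (cmod z + cmod z0) * Sb + (2 * cmod z0 + cmod a * cmod z)\<^sup>2 / 2 - (cmod z)\<^sup>2 / 2"
    using 1 2 by linarith
  also have "\<dots> = (cmod q * Sb + 2 * cmod z0 * cmod a) * cmod z + (cmod q * Sb * cmod z0 + 2 * (cmod z0)\<^sup>2)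
        - ((1 - (cmod a)\<^sup>2) / 2) * (cmod z)\<^sup>2"
    by (simp add: power2_eq_square field_simps)
  finally show ?thesis .
qed

lemma exp_combine:
  fixes v x y w k :: real
  shows "exp (v * x) * (k * exp (v * y / 2)) * exp (- v * w / 2) = k * exp (v * (x + y / 2 - w / 2))"
proof -
  have "v * (x + y / 2 - w / 2) = v * x + (v * y / 2 + - v * w / 2)" by (simp add: algebra_simps)
  then have "exp (v * (x + y / 2 - w / 2)) = exp (v * x) * (exp (v * y / 2) * exp (- v * w / 2))"
    by (simp only: exp_add)
  then show ?thesis by (simp add: mult_ac)
qed

lemma part2:
  fixes \<nu> :: real and a b p q :: complex
  assumes nu: "1 \<le> \<nu>" and a0: "0 < cmod a" and a1: "cmod a < 1"
  assumes neg: "Re p + Re (q * b / (1 - a)) - ln (cmod a) < 0"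
  shows "power_bounded \<nu> (wcomp (\<lambda>z. exp (p + q * z)) (\<lambda>z. a * z + b))"
proof -
  define T where "T = wcomp (\<lambda>z. exp (p + q * z)) (\<lambda>z. a * z + b)"
  have a1': "a \<noteq> 1" using a1 by auto
  define z0 where "z0 = b / (1 - a)"
  define lam where "lam = exp (p + q * z0)"
  have "Re p + Re (q * z0) < ln (cmod a)" using neg by (simp add: z0_def)
  also have "ln (cmod a) < 0" using a0 a1 by simp
  finally have "cmod lam < 1" by (simp add: lam_def)
  then have L: "cmod lam \<le> 1" by simp
  define Sb where "Sb = 1 / (1 - cmod a)"
  define A where "A = \<nu> * (cmod q * Sb + 2 * cmod z0 * cmod a)"
  define C where "C = \<nu> * (cmod q * Sb * cmod z0 + 2 * (cmod z0)\<^sup>2)"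
  define B where "B = \<nu> * ((1 - (cmod a)\<^sup>2) / 2)"
  have B0: "0 < B" using nu a1 a0 unfolding B_def by (simp add: power_less_one_iff abs_square_less_1)
  define D where "D z = exp (A * cmod z + C - B * (cmod z)\<^sup>2)" for z :: complex
  have intD: "integrable lborel D" unfolding D_def[abs_def] by (rule integrable_quad[OF B0])
  define ID where "ID = integral\<^sup>L lborel D"
  define K where "K = (\<nu> / (2 * pi) * ID) powr (1 / \<nu>)"
  have CF: "(T ^^ n) f = (\<lambda>z. lam ^ n * exp (q * (z - z0) * (\<Sum>k<n. a ^ k)) * f (z0 + a ^ n * (z - z0)))" for n f
    unfolding T_def z0_def lam_def by (rule closed_form[OF a1'])
  have main: "in_fock \<nu> ((T ^^ n) f) \<and> fock_norm \<nu> ((T ^^ n) f) \<le> K * fock_norm \<nu> f"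
    if n: "1 \<le> n" and f: "in_fock \<nu> f" for n f
  proof -
    have holf: "f holomorphic_on UNIV" and intf: "integrable lborel (fock_weight \<nu> f)"
      using f by (auto simp: in_fock_def)
    define Nf where "Nf = integral\<^sup>L lborel (fock_weight \<nu> f)"
    have Nf0: "0 \<le> Nf" unfolding Nf_def by (simp add: fock_weight_nonneg)
    define Kf where "Kf = \<nu> / (2 * pi) * Nf"
    have Kf0: "0 \<le> Kf" using nu Nf0 by (simp add: Kf_def)
    have hol: "(T ^^ n) f holomorphic_on UNIV"
    proof -
      have "(\<lambda>z. z0 + a ^ n * (z - z0)) holomorphic_on UNIV" by (intro holomorphic_intros)
      then have "(f \<circ> (\<lambda>z. z0 + a ^ n * (z - z0))) holomorphic_on UNIV"
        by (rule holomorphic_on_compose) (auto intro: holomorphic_on_subset[OF holf])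
      then show ?thesis unfolding CF by (auto simp: o_def intro!: holomorphic_intros)
    qed
    have bound: "fock_weight \<nu> ((T ^^ n) f) z \<le> Kf * D z" for z
    proof -
      define \<Phi> where "\<Phi> = z0 + a ^ n * (z - z0)"
      define E where "E = exp (q * (z - z0) * (\<Sum>k<n. a ^ k))"
      have "fock_weight \<nu> ((T ^^ n) f) z = (cmod lam ^ n * (cmod E * cmod (f \<Phi>))) powr \<nu> * rho \<nu> z"
        by (simp add: CF fock_weight_def rho_def \<Phi>_def E_def norm_mult norm_power mult.assoc)
      also have "\<dots> \<le> (cmod E * cmod (f \<Phi>)) powr \<nu> * rho \<nu> z"
      proof (intro mult_right_mono powr_mono2)
        show "cmod lam ^ n * (cmod E * cmod (f \<Phi>)) \<le> cmod E * cmod (f \<Phi>)"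
          using L by (intro mult_left_le_one_le) (auto intro: power_le_one)
      qed (use nu in \<open>auto simp: rho_def\<close>)
      also have "\<dots> = exp (\<nu> * Re (q * (z - z0) * (\<Sum>k<n. a ^ k))) * (cmod (f \<Phi>) powr \<nu>) * rho \<nu> z"
        by (simp add: E_def powr_mult exp_powr_real mult.commute)
      also have "\<dots> \<le> exp (\<nu> * Re (q * (z - z0) * (\<Sum>k<n. a ^ k))) * (Kf * exp (\<nu> * (cmod \<Phi>)\<^sup>2 / 2)) * rho \<nu> z"
      proof (intro mult_right_mono mult_left_mono)
        have "cmod (f \<Phi>) powr \<nu> * rho \<nu> \<Phi> * (2 * pi / \<nu>) \<le> Nf"
          unfolding Nf_def by (rule pw_real[OF f nu])
        then have "cmod (f \<Phi>) powr \<nu> * rho \<nu> \<Phi> \<le> Kf"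
          using nu unfolding Kf_def by (simp add: field_simps)
        moreover have "rho \<nu> \<Phi> * exp (\<nu> * (cmod \<Phi>)\<^sup>2 / 2) = 1"
          by (simp add: rho_def mult_exp_exp)
        ultimately have "cmod (f \<Phi>) powr \<nu> * rho \<nu> \<Phi> * exp (\<nu> * (cmod \<Phi>)\<^sup>2 / 2) \<le> Kf * exp (\<nu> * (cmod \<Phi>)\<^sup>2 / 2)"
          by (intro mult_right_mono) auto
        then show "cmod (f \<Phi>) powr \<nu> \<le> Kf * exp (\<nu> * (cmod \<Phi>)\<^sup>2 / 2)"
          using \<open>rho \<nu> \<Phi> * exp (\<nu> * (cmod \<Phi>)\<^sup>2 / 2) = 1\<close> by (simp add: mult.assoc)
      qed (auto simp: rho_def)
      also have "\<dots> = Kf * exp (\<nu> * (Re (q * (z - z0) * (\<Sum>k<n. a ^ k)) + (cmod \<Phi>)\<^sup>2 / 2 - (cmod z)\<^sup>2 / 2))"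
        unfolding rho_def by (rule exp_combine)
      also have "\<dots> \<le> Kf * D z"
      proof (intro mult_left_mono Kf0)
        have "Re (q * (z - z0) * (\<Sum>k<n. a ^ k)) + (cmod \<Phi>)\<^sup>2 / 2 - (cmod z)\<^sup>2 / 2
           \<le> (cmod q * Sb + 2 * cmod z0 * cmod a) * cmod z + (cmod q * Sb * cmod z0 + 2 * (cmod z0)\<^sup>2)
              - ((1 - (cmod a)\<^sup>2) / 2) * (cmod z)\<^sup>2"
          unfolding \<Phi>_def Sb_def by (rule exponent_bound[OF a1 n])
        then have "\<nu> * (Re (q * (z - z0) * (\<Sum>k<n. a ^ k)) + (cmod \<Phi>)\<^sup>2 / 2 - (cmod z)\<^sup>2 / 2)
           \<le> \<nu> * ((cmod q * Sb + 2 * cmod z0 * cmod a) * cmod z + (cmod q * Sb * cmod z0 + 2 * (cmod z0)\<^sup>2)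
              - ((1 - (cmod a)\<^sup>2) / 2) * (cmod z)\<^sup>2)"
          using nu by (intro mult_left_mono) auto
        also have "\<dots> = A * cmod z + C - B * (cmod z)\<^sup>2"
          by (simp add: A_def B_def C_def algebra_simps)
        finally show "exp (\<nu> * (Re (q * (z - z0) * (\<Sum>k<n. a ^ k)) + (cmod \<Phi>)\<^sup>2 / 2 - (cmod z)\<^sup>2 / 2)) \<le> D z"
          unfolding D_def by simp
      qed
      finally show ?thesis .
    qed
    have meas: "fock_weight \<nu> ((T ^^ n) f) \<in> borel_measurable lborel"
      using fock_weight_meas[OF hol] by simp
    have intKD: "integrable lborel (\<lambda>z. Kf * D z)" using intD by simp
    have intn: "integrable lborel (fock_weight \<nu> ((T ^^ n) f))"
    proof (rule Bochner_Integration.integrable_bound[OF intKD meas])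
      show "AE z in lborel. norm (fock_weight \<nu> ((T ^^ n) f) z) \<le> norm (Kf * D z)"
        using bound Kf0 by (auto simp: fock_weight_nonneg D_def intro!: AE_I2)
    qed
    have "integral\<^sup>L lborel (fock_weight \<nu> ((T ^^ n) f)) \<le> integral\<^sup>L lborel (\<lambda>z. Kf * D z)"
      by (rule integral_mono[OF intn intKD bound])
    also have "\<dots> = Kf * ID" by (simp add: ID_def)
    finally have In: "integral\<^sup>L lborel (fock_weight \<nu> ((T ^^ n) f)) \<le> Kf * ID" .
    have ID0: "0 \<le> ID" unfolding ID_def D_def by simp
    have "fock_norm \<nu> ((T ^^ n) f) = (\<nu> / (2 * pi) * integral\<^sup>L lborel (fock_weight \<nu> ((T ^^ n) f))) powr (1 / \<nu>)"
      by (simp add: fock_norm_def)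
    also have "\<dots> \<le> (\<nu> / (2 * pi) * (Kf * ID)) powr (1 / \<nu>)"
      using nu In by (intro powr_mono2 mult_left_mono) (auto simp: fock_weight_nonneg)
    also have "\<nu> / (2 * pi) * (Kf * ID) = (\<nu> / (2 * pi) * ID) * (\<nu> / (2 * pi) * Nf)"
      by (simp add: Kf_def mult_ac)
    also have "((\<nu> / (2 * pi) * ID) * (\<nu> / (2 * pi) * Nf)) powr (1 / \<nu>) = K * fock_norm \<nu> f"
      unfolding K_def fock_norm_def Nf_def by (rule powr_mult)
    finally show ?thesis using hol intn by (simp add: in_fock_def)
  qed
  show ?thesis unfolding power_bounded_def T_def[symmetric] using main by blast
qed

theorem theorem3p3:
  fixes \<nu> :: real and a b p q :: complex
  assumes "1 \<le> \<nu>" and "0 < cmod a" and "cmod a < 1"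
  shows "(Re p + Re (q * b / (1 - a)) > 0 \<longrightarrow>
            \<not> power_bounded \<nu> (wcomp (\<lambda>z. exp (p + q * z)) (\<lambda>z. a * z + b)))
       \<and> (Re p + Re (q * b / (1 - a)) - ln (cmod a) < 0 \<longrightarrow>
            power_bounded \<nu> (wcomp (\<lambda>z. exp (p + q * z)) (\<lambda>z. a * z + b)))"
  using part1[OF assms(1) assms(3)] part2[OF assms] by blast

end
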